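(* Let $W$ be an arbitrary quantum walk on $\ell^2(\mathbb{Z})\otimes\mathbb{C}^2$ and $k\in\mathbb{N}$. Then $v(W^k)=k\,v(W)$.
   Context: $\ell^2(\mathbb{Z})\otimes\mathbb{C}^2$ has basis $\delta_j^\pm=\delta_j\otimes e_\pm$. State-dependent shifts: $S_\pm=T^{\pm1}\otimes P_\pm+\mathbb{1}\otimes P_\mp$, where $T\delta_j=\delta_{j+1}$ and $P_\pm$ are the projections onto $e_+=(1,0)^\top$, $e_-=(0,1)^\top$. A coin operator acts as $C(\delta_j\otimes v)=\delta_j\otimes C(j)v$ with $C(j)$ unitary $2\times2$ matrices. A quantum walk is a finite product of shift operators $S_\pm$ and coin operators. $Q\delta_j^\pm=j\delta_j^\pm$ is the position operator. For a walk $W$ and normalized $\psi\in\mathrm{dom}(Q)$, $v(W,\psi)=\limsup_{t\to\infty,\,t\in\mathbb{N}}\frac1t\|QW^t\psi\|$, and $v(W)=\sup\{v(W,\psi):\psi\in\mathrm{dom}(Q),\|\psi\|=1\}$. *)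

theory Defs
  imports "HOL-Analysis.Analysis"
begin

text \<open>Vectors of l2(Z) tensor C^2 are functions on Z x {+,-}; the second
  component True stands for e_+ and False for e_-.\<close>
type_synonym qvec = "int \<times> bool \<Rightarrow> complex"

definition l2 :: "qvec set" where
  "l2 = {\<psi>. (\<lambda>x. (cmod (\<psi> x))\<^sup>2) summable_on UNIV}"

definition l2norm :: "qvec \<Rightarrow> real" where
  "l2norm \<psi> = sqrt (\<Sum>\<^sub>\<infinity>x. (cmod (\<psi> x))\<^sup>2)"

definition posop :: "qvec \<Rightarrow> qvec" where
  "posop \<psi> = (\<lambda>(j, s). of_int j * \<psi> (j, s))"

definition domQ :: "qvec set" where
  "domQ = {\<psi>. \<psi> \<in> l2 \<and> posop \<psi> \<in> l2}"

text \<open>S_+ = T (x) P_+ + 1 (x) P_-,  S_- = T^{-1} (x) P_- + 1 (x) P_+, with T delta_j = delta_{j+1}.\<close>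
definition Splus :: "qvec \<Rightarrow> qvec" where
  "Splus \<psi> = (\<lambda>(j, s). if s then \<psi> (j - 1, True) else \<psi> (j, False))"

definition Sminus :: "qvec \<Rightarrow> qvec" where
  "Sminus \<psi> = (\<lambda>(j, s). if s then \<psi> (j, True) else \<psi> (j + 1, False))"

text \<open>A 2x2 matrix is a function bool => bool => complex (row, column).\<close>
definition unitary2 :: "(bool \<Rightarrow> bool \<Rightarrow> complex) \<Rightarrow> bool" where
  "unitary2 M \<longleftrightarrow>
     (\<forall>a b. (\<Sum>k\<in>UNIV. cnj (M k a) * M k b) = (if a = b then 1 else 0)) \<and>
     (\<forall>a b. (\<Sum>k\<in>UNIV. M a k * cnj (M b k)) = (if a = b then 1 else 0))"

definition coin_op :: "(int \<Rightarrow> bool \<Rightarrow> bool \<Rightarrow> complex) \<Rightarrow> qvec \<Rightarrow> qvec" where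
  "coin_op C \<psi> = (\<lambda>(j, s). \<Sum>s'\<in>UNIV. C j s s' * \<psi> (j, s'))"

inductive qwalk :: "(qvec \<Rightarrow> qvec) \<Rightarrow> bool" where
  shift_plus: "qwalk Splus"
| shift_minus: "qwalk Sminus"
| coin: "(\<And>j. unitary2 (C j)) \<Longrightarrow> qwalk (coin_op C)"
| prod: "qwalk A \<Longrightarrow> qwalk B \<Longrightarrow> qwalk (A \<circ> B)"

definition velocity_at :: "(qvec \<Rightarrow> qvec) \<Rightarrow> qvec \<Rightarrow> ereal" where
  "velocity_at W \<psi> = limsup (\<lambda>t::nat. ereal (l2norm (posop ((W ^^ t) \<psi>)) / real t))"

definition velocity :: "(qvec \<Rightarrow> qvec) \<Rightarrow> ereal" where
  "velocity W = (SUP \<psi>\<in>{\<psi>. \<psi> \<in> domQ \<and> l2norm \<psi> = 1}. velocity_at W \<psi>)"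

end

theory Submission
  imports Defs
begin

lemma L2_le_l2norm:
  assumes "f \<in> l2" "finite F"
  shows "L2_set (\<lambda>x. cmod (f x)) F \<le> l2norm f"
proof -
  have "(\<Sum>x\<in>F. (cmod (f x))\<^sup>2) \<le> (\<Sum>\<^sub>\<infinity>x. (cmod (f x))\<^sup>2)"
    using assms by (intro finite_sum_le_infsum) (auto simp: l2_def)
  then show ?thesis unfolding L2_set_def l2norm_def by simp
qed

lemma l2norm_nonneg: "l2norm f \<ge> 0"
  unfolding l2norm_def by (simp add: infsum_nonneg)

lemma mink:
  assumes "f \<in> l2" "g \<in> l2" "\<And>x. cmod (h x) \<le> cmod (f x) + cmod (g x)"
  shows "h \<in> l2 \<and> l2norm h \<le> l2norm f + l2norm g"
proof -
  define B where "B = l2norm f + l2norm g"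
  have B0: "B \<ge> 0" unfolding B_def using l2norm_nonneg by (simp add: add_nonneg_nonneg)
  have fin: "(\<Sum>x\<in>F. (cmod (h x))\<^sup>2) \<le> B\<^sup>2" if "finite F" for F
  proof -
    have "L2_set (\<lambda>x. cmod (h x)) F \<le> L2_set (\<lambda>x. cmod (f x) + cmod (g x)) F"
      by (rule L2_set_mono) (use assms(3) in auto)
    also have "\<dots> \<le> L2_set (\<lambda>x. cmod (f x)) F + L2_set (\<lambda>x. cmod (g x)) F"
      by (rule L2_set_triangle_ineq)
    also have "\<dots> \<le> B" unfolding B_def
      using L2_le_l2norm[OF assms(1) that] L2_le_l2norm[OF assms(2) that] by simp
    finally have "L2_set (\<lambda>x. cmod (h x)) F \<le> B" .
    moreover have "L2_set (\<lambda>x. cmod (h x)) F \<ge> 0" by (simp add: L2_set_def sum_nonneg)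
    ultimately have "(L2_set (\<lambda>x. cmod (h x)) F)\<^sup>2 \<le> B\<^sup>2"
      by (simp add: power_mono)
    then show ?thesis unfolding L2_set_def by (simp add: sum_nonneg)
  qed
  have sh: "(\<lambda>x. (cmod (h x))\<^sup>2) summable_on UNIV"
    by (rule nonneg_bdd_above_summable_on) (use fin in \<open>auto simp: bdd_above_def\<close>)
  have "(\<Sum>\<^sub>\<infinity>x. (cmod (h x))\<^sup>2) \<le> B\<^sup>2"
    by (rule infsum_le_finite_sums[OF sh]) (use fin in auto)
  then have "l2norm h \<le> sqrt (B\<^sup>2)" unfolding l2norm_def by (rule real_sqrt_le_mono)
  with B0 sh show ?thesis by (simp add: l2_def B_def)
qed

lemma reindex_l2:
  assumes "bij \<sigma>" "f \<in> l2"
  shows "(\<lambda>x. f (\<sigma> x)) \<in> l2 \<and> l2norm (\<lambda>x. f (\<sigma> x)) = l2norm f"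
  using assms summable_on_reindex_bij_betw[of \<sigma> UNIV UNIV "\<lambda>x. (cmod (f x))\<^sup>2"]
    infsum_reindex_bij_betw[of \<sigma> UNIV UNIV "\<lambda>x. (cmod (f x))\<^sup>2"]
  by (simp add: l2_def l2norm_def)

lemma shift_gen:
  assumes "bij \<sigma>" "\<And>j s. \<bar>j\<bar> \<le> \<bar>fst (\<sigma> (j, s))\<bar> + 1" "\<phi> \<in> domQ"
  shows "(\<lambda>x. \<phi> (\<sigma> x)) \<in> domQ \<and> l2norm (\<lambda>x. \<phi> (\<sigma> x)) = l2norm \<phi> \<and>
         l2norm (posop (\<lambda>x. \<phi> (\<sigma> x))) \<le> l2norm (posop \<phi>) + l2norm \<phi>"
proof -
  have p: "\<phi> \<in> l2" "posop \<phi> \<in> l2" using assms(3) by (auto simp: domQ_def)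
  note r1 = reindex_l2[OF assms(1) p(1)] and r2 = reindex_l2[OF assms(1) p(2)]
  have pt: "cmod (posop (\<lambda>x. \<phi> (\<sigma> x)) x) \<le> cmod (posop \<phi> (\<sigma> x)) + cmod (\<phi> (\<sigma> x))" for x
  proof -
    obtain j s where x: "x = (j, s)" by fastforce
    obtain j' s' where y: "\<sigma> (j, s) = (j', s')" by fastforce
    have "\<bar>j\<bar> \<le> \<bar>j'\<bar> + 1" using assms(2)[of j s] y by simp
    then have "real_of_int \<bar>j\<bar> * cmod (\<phi> (j', s')) \<le> (real_of_int \<bar>j'\<bar> + 1) * cmod (\<phi> (j', s'))"
      by (intro mult_right_mono) (auto simp del: of_int_abs simp flip: of_int_abs)
    then show ?thesis using x y by (simp add: posop_def norm_mult algebra_simps)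
  qed
  from mink[OF r2[THEN conjunct1] r1[THEN conjunct1] pt] r1 r2 p
  show ?thesis by (simp add: domQ_def)
qed

definition sigp :: "int \<times> bool \<Rightarrow> int \<times> bool" where
  "sigp = (\<lambda>(j, s). if s then (j - 1, True) else (j, False))"
definition sigm :: "int \<times> bool \<Rightarrow> int \<times> bool" where
  "sigm = (\<lambda>(j, s). if s then (j, True) else (j + 1, False))"

lemma bij_sigp: "bij sigp"
proof (rule bij_betw_byWitness[where f' = "\<lambda>(j, s). if s then (j + 1, True) else (j, False)"])
qed (auto simp: sigp_def)

lemma bij_sigm: "bij sigm"
proof (rule bij_betw_byWitness[where f' = "\<lambda>(j, s). if s then (j, True) else (j - 1, False)"])
qed (auto simp: sigm_def)

lemma Splus_eq: "Splus \<phi> = (\<lambda>x. \<phi> (sigp x))"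
  by (auto simp: Splus_def sigp_def fun_eq_iff)
lemma Sminus_eq: "Sminus \<phi> = (\<lambda>x. \<phi> (sigm x))"
  by (auto simp: Sminus_def sigm_def fun_eq_iff)

lemma Splus_ok: "\<phi> \<in> domQ \<Longrightarrow> Splus \<phi> \<in> domQ \<and> l2norm (Splus \<phi>) = l2norm \<phi> \<and>
         l2norm (posop (Splus \<phi>)) \<le> l2norm (posop \<phi>) + l2norm \<phi>"
  unfolding Splus_eq by (rule shift_gen[OF bij_sigp]) (auto simp: sigp_def)

lemma Sminus_ok: "\<phi> \<in> domQ \<Longrightarrow> Sminus \<phi> \<in> domQ \<and> l2norm (Sminus \<phi>) = l2norm \<phi> \<and>
         l2norm (posop (Sminus \<phi>)) \<le> l2norm (posop \<phi>) + l2norm \<phi>"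
  unfolding Sminus_eq by (rule shift_gen[OF bij_sigm]) (auto simp: sigm_def)

lemma bij_inT: "bij_betw (\<lambda>j::int. (j, True)) UNIV (range (\<lambda>j. (j, True)))"
  by (auto simp: bij_betw_def inj_on_def)
lemma bij_inF: "bij_betw (\<lambda>j::int. (j, False)) UNIV (range (\<lambda>j. (j, False)))"
  by (auto simp: bij_betw_def inj_on_def)
lemma UNIV_split: "(UNIV :: (int \<times> bool) set) = range (\<lambda>j. (j, True)) \<union> range (\<lambda>j. (j, False))"
proof (rule set_eqI)
  fix x :: "int \<times> bool"
  show "x \<in> UNIV \<longleftrightarrow> x \<in> range (\<lambda>j. (j, True)) \<union> range (\<lambda>j. (j, False))"
    by (cases x, cases "snd x") auto
qed

lemma pair_sum:
  fixes f :: "int \<times> bool \<Rightarrow> real"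
  assumes nn: "\<And>x. f x \<ge> 0"
  shows "f summable_on UNIV \<longleftrightarrow> (\<lambda>j. f (j, True) + f (j, False)) summable_on UNIV"
    and "f summable_on UNIV \<Longrightarrow> infsum f UNIV = (\<Sum>\<^sub>\<infinity>j. f (j, True) + f (j, False))"
proof -
  have eqT: "(\<lambda>j. f (j, True)) summable_on UNIV \<longleftrightarrow> f summable_on range (\<lambda>j. (j, True))"
    by (rule summable_on_reindex_bij_betw[OF bij_inT])
  have eqF: "(\<lambda>j. f (j, False)) summable_on UNIV \<longleftrightarrow> f summable_on range (\<lambda>j. (j, False))"
    by (rule summable_on_reindex_bij_betw[OF bij_inF])
  have disj: "range (\<lambda>j::int. (j, True)) \<inter> range (\<lambda>j. (j, False)) = {}" by auto
  have main: "infsum f UNIV = (\<Sum>\<^sub>\<infinity>j. f (j, True) + f (j, False))"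
    if sT: "(\<lambda>j. f (j, True)) summable_on UNIV" and sF: "(\<lambda>j. f (j, False)) summable_on UNIV"
  proof -
    have "infsum f UNIV = infsum f (range (\<lambda>j. (j, True))) + infsum f (range (\<lambda>j. (j, False)))"
      by (subst UNIV_split, rule infsum_Un_disjoint) (use sT sF eqT eqF disj in auto)
    also have "\<dots> = (\<Sum>\<^sub>\<infinity>j. f (j, True)) + (\<Sum>\<^sub>\<infinity>j. f (j, False))"
      using infsum_reindex_bij_betw[OF bij_inT, of f] infsum_reindex_bij_betw[OF bij_inF, of f] by simp
    also have "\<dots> = (\<Sum>\<^sub>\<infinity>j. f (j, True) + f (j, False))"
      by (rule infsum_add[symmetric]) (use sT sF in auto)
    finally show ?thesis .
  qed
  show 1: "f summable_on UNIV \<longleftrightarrow> (\<lambda>j. f (j, True) + f (j, False)) summable_on UNIV"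
  proof
    assume s: "f summable_on UNIV"
    have "(\<lambda>j. f (j, True)) summable_on UNIV" "(\<lambda>j. f (j, False)) summable_on UNIV"
      using eqT eqF summable_on_subset[OF s] by auto
    then show "(\<lambda>j. f (j, True) + f (j, False)) summable_on UNIV" by (rule summable_on_add)
  next
    assume s: "(\<lambda>j. f (j, True) + f (j, False)) summable_on UNIV"
    have sT: "(\<lambda>j. f (j, True)) summable_on UNIV"
      by (rule summable_on_comparison_test[OF s]) (use nn in \<open>auto simp: add_increasing2\<close>)
    have sF: "(\<lambda>j. f (j, False)) summable_on UNIV"
      by (rule summable_on_comparison_test[OF s]) (use nn in \<open>auto simp: add_increasing\<close>)
    show "f summable_on UNIV"
      by (subst UNIV_split, rule summable_on_Un_disjoint) (use sT sF eqT eqF disj in auto)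
  qed
  assume s: "f summable_on UNIV"
  have "(\<lambda>j. f (j, True)) summable_on UNIV" "(\<lambda>j. f (j, False)) summable_on UNIV"
    using eqT eqF summable_on_subset[OF s] by auto
  then show "infsum f UNIV = (\<Sum>\<^sub>\<infinity>j. f (j, True) + f (j, False))" by (rule main)
qed

lemma unitary_pres:
  assumes "unitary2 M"
  shows "(cmod (M True True * a + M True False * b))\<^sup>2 + (cmod (M False True * a + M False False * b))\<^sup>2
         = (cmod a)\<^sup>2 + (cmod b)\<^sup>2"
proof -
  have u: "\<And>x y. (\<Sum>k\<in>UNIV. cnj (M k x) * M k y) = (if x = y then 1 else 0)"
    using assms by (simp add: unitary2_def)
  have UB: "(UNIV :: bool set) = {True, False}" by auto
  have e1: "cnj (M True True) * M True True + cnj (M False True) * M False True = 1"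
    using u[of True True] by (simp add: UB)
  have e2: "cnj (M True True) * M True False + cnj (M False True) * M False False = 0"
    using u[of True False] by (simp add: UB)
  have e3: "cnj (M True False) * M True True + cnj (M False False) * M False True = 0"
    using u[of False True] by (simp add: UB)
  have e4: "cnj (M True False) * M True False + cnj (M False False) * M False False = 1"
    using u[of False False] by (simp add: UB)
  have "complex_of_real ((cmod (M True True * a + M True False * b))\<^sup>2 + (cmod (M False True * a + M False False * b))\<^sup>2)
      = complex_of_real ((cmod a)\<^sup>2 + (cmod b)\<^sup>2)"
    unfolding of_real_add complex_norm_square complex_cnj_add complex_cnj_mult
    using e1 e2 e3 e4 by algebra
  then show ?thesis using of_real_eq_iff by blast
qed

lemma coin_eval: "coin_op C \<phi> (j, s) = C j s True * \<phi> (j, True) + C j s False * \<phi> (j, False)"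
proof -
  have UB: "(UNIV :: bool set) = {True, False}" by auto
  show ?thesis by (simp add: coin_op_def UB)
qed

lemma coin_l2:
  assumes "\<And>j. unitary2 (C j)" "\<phi> \<in> l2"
  shows "coin_op C \<phi> \<in> l2 \<and> l2norm (coin_op C \<phi>) = l2norm \<phi>"
proof -
  let ?f = "\<lambda>x. (cmod (\<phi> x))\<^sup>2" and ?g = "\<lambda>x. (cmod (coin_op C \<phi> x))\<^sup>2"
  have pe: "(\<lambda>j. ?g (j, True) + ?g (j, False)) = (\<lambda>j. ?f (j, True) + ?f (j, False))"
    using unitary_pres[OF assms(1)] by (simp add: coin_eval fun_eq_iff)
  have sf: "?f summable_on UNIV" using assms(2) by (simp add: l2_def)
  have sp: "(\<lambda>j. ?f (j, True) + ?f (j, False)) summable_on UNIV"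
    using pair_sum(1)[of ?f] sf by simp
  have sg: "?g summable_on UNIV" using pair_sum(1)[of ?g] sp pe by simp
  have "infsum ?g UNIV = infsum ?f UNIV"
    using pair_sum(2)[of ?g] pair_sum(2)[of ?f] sf sg pe by simp
  then show ?thesis using sg by (simp add: l2_def l2norm_def)
qed

lemma coin_posop: "posop (coin_op C \<phi>) = coin_op C (posop \<phi>)"
proof (rule ext)
  fix x :: "int \<times> bool"
  obtain j s where x: "x = (j, s)" by fastforce
  show "posop (coin_op C \<phi>) x = coin_op C (posop \<phi>) x"
    unfolding x posop_def by (simp only: coin_eval prod.case) (simp add: algebra_simps)
qed

lemma coin_ok:
  assumes "\<And>j. unitary2 (C j)" "\<phi> \<in> domQ"
  shows "coin_op C \<phi> \<in> domQ \<and> l2norm (coin_op C \<phi>) = l2norm \<phi> \<and>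
         l2norm (posop (coin_op C \<phi>)) \<le> l2norm (posop \<phi>) + 0 * l2norm \<phi>"
  using coin_l2[OF assms(1), of \<phi>] coin_l2[OF assms(1), of "posop \<phi>"] assms(2)
  by (simp add: domQ_def coin_posop)

lemma walk_ok:
  assumes "qwalk W"
  shows "\<exists>c\<ge>0. \<forall>\<phi>\<in>domQ. W \<phi> \<in> domQ \<and> l2norm (W \<phi>) = l2norm \<phi> \<and>
           l2norm (posop (W \<phi>)) \<le> l2norm (posop \<phi>) + c * l2norm \<phi>"
  using assms
proof induction
  case shift_plus
  show ?case using Splus_ok by (intro exI[of _ 1]) simp
next
  case shift_minus
  show ?case using Sminus_ok by (intro exI[of _ 1]) simp
next
  case (coin C)
  show ?case using coin_ok[OF coin] by (intro exI[of _ 0]) simp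
next
  case (prod A B)
  obtain a where a: "a \<ge> 0" "\<forall>\<phi>\<in>domQ. A \<phi> \<in> domQ \<and> l2norm (A \<phi>) = l2norm \<phi> \<and>
           l2norm (posop (A \<phi>)) \<le> l2norm (posop \<phi>) + a * l2norm \<phi>" using prod.IH(1) by blast
  obtain b where b: "b \<ge> 0" "\<forall>\<phi>\<in>domQ. B \<phi> \<in> domQ \<and> l2norm (B \<phi>) = l2norm \<phi> \<and>
           l2norm (posop (B \<phi>)) \<le> l2norm (posop \<phi>) + b * l2norm \<phi>" using prod.IH(2) by blast
  show ?case
  proof (rule exI[of _ "a + b"], intro conjI ballI)
    fix \<phi> assume p: "\<phi> \<in> domQ"
    from b(2) p have B: "B \<phi> \<in> domQ" "l2norm (B \<phi>) = l2norm \<phi>"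
      "l2norm (posop (B \<phi>)) \<le> l2norm (posop \<phi>) + b * l2norm \<phi>" by auto
    from a(2) B(1) have A: "A (B \<phi>) \<in> domQ" "l2norm (A (B \<phi>)) = l2norm (B \<phi>)"
      "l2norm (posop (A (B \<phi>))) \<le> l2norm (posop (B \<phi>)) + a * l2norm (B \<phi>)" by auto
    show "(A \<circ> B) \<phi> \<in> domQ" using A(1) by simp
    show "l2norm ((A \<circ> B) \<phi>) = l2norm \<phi>" using A(2) B(2) by simp
    show "l2norm (posop ((A \<circ> B) \<phi>)) \<le> l2norm (posop \<phi>) + (a + b) * l2norm \<phi>"
      using A(3) B(2,3) by (simp add: distrib_right)
  qed (use a b in simp)
qed

lemma Limsup_filter_le: "F \<le> G \<Longrightarrow> Limsup F f \<le> Limsup G (f :: _ \<Rightarrow> 'b::complete_lattice)"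
  unfolding Limsup_def
  by (rule INF_superset_mono) (auto simp: le_filter_def)

lemma limsup_compose_le:
  fixes v :: "nat \<Rightarrow> 'b::complete_linorder"
  assumes "filterlim r sequentially sequentially"
  shows "limsup (\<lambda>n. v (r n)) \<le> limsup v"
proof -
  have "limsup (\<lambda>n. v (r n)) \<le> Limsup (filtermap r sequentially) v"
    by (rule Limsup_filtermap_ge)
  also have "\<dots> \<le> limsup v"
    using assms by (intro Limsup_filter_le) (simp add: filterlim_def)
  finally show ?thesis .
qed

lemma div_filterlim: "k \<ge> 1 \<Longrightarrow> filterlim (\<lambda>n::nat. n div k) sequentially sequentially"
  unfolding filterlim_at_top eventually_sequentially
proof (intro allI exI[of _ "_ * k"] allI impI)
  fix Z n :: nat assume "k \<ge> 1" "Z * k \<le> n"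
  then show "Z \<le> n div k"
    by (metis div_le_mono nonzero_mult_div_cancel_right not_one_le_zero)
qed

lemma delta_in: "\<exists>\<psi>. \<psi> \<in> domQ \<and> l2norm \<psi> = 1"
proof -
  define d :: qvec where "d = (\<lambda>x. if x = (0, True) then 1 else 0)"
  have e: "(\<lambda>x. (cmod (d x))\<^sup>2) = (\<lambda>x. if x = (0, True) then 1 else 0)"
    by (auto simp: d_def fun_eq_iff)
  have s: "(\<lambda>x::int\<times>bool. if x = (0, True) then (1::real) else 0) summable_on UNIV"
    using summable_on_cong_neutral[of "{(0,True)}" UNIV "\<lambda>x::int\<times>bool. if x = (0, True) then (1::real) else 0"
       "\<lambda>x::int\<times>bool. if x = (0, True) then (1::real) else 0"] by auto
  have i: "(\<Sum>\<^sub>\<infinity>x::int\<times>bool. if x = (0, True) then (1::real) else 0) = 1"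
    using infsum_cong_neutral[of "{(0,True)}" UNIV "\<lambda>x::int\<times>bool. if x = (0, True) then (1::real) else 0"
       "\<lambda>x::int\<times>bool. if x = (0, True) then (1::real) else 0"] by auto
  have p: "posop d = (\<lambda>_. 0)" by (auto simp: posop_def d_def fun_eq_iff)
  have "d \<in> domQ" unfolding domQ_def l2_def using s e p by simp
  moreover have "l2norm d = 1" unfolding l2norm_def e i by simp
  ultimately show ?thesis by blast
qed

lemma vel_pt:
  assumes "qwalk W" "\<psi> \<in> domQ" "k \<ge> 1"
  shows "velocity_at (W ^^ k) \<psi> = ereal (real k) * velocity_at W \<psi>"
proof -
  obtain c where c: "c \<ge> 0" "\<forall>\<phi>\<in>domQ. W \<phi> \<in> domQ \<and> l2norm (W \<phi>) = l2norm \<phi> \<and>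
           l2norm (posop (W \<phi>)) \<le> l2norm (posop \<phi>) + c * l2norm \<phi>"
    using walk_ok[OF assms(1)] by blast
  define a where "a n = l2norm (posop ((W ^^ n) \<psi>))" for n
  define D where "D = c * l2norm \<psi>"
  have D0: "D \<ge> 0" unfolding D_def using c(1) l2norm_nonneg by simp
  have inv: "(W ^^ n) \<psi> \<in> domQ \<and> l2norm ((W ^^ n) \<psi>) = l2norm \<psi>" for n
    by (induction n) (use assms(2) c(2) in auto)
  have step: "a (Suc n) \<le> a n + D" for n
    using bspec[OF c(2) inv[of n, THEN conjunct1]] inv[of n] by (simp add: a_def D_def)
  have steps: "a (m + r) \<le> a m + real r * D" for m r
  proof (induction r)
    case (Suc r)
    then show ?case using step[of "m + r"] by (simp add: algebra_simps)
  qed simp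
  have a0: "a n \<ge> 0" for n unfolding a_def by (rule l2norm_nonneg)
  define u where "u n = ereal (a n / real n)" for n
  have vW: "velocity_at W \<psi> = limsup u"
    unfolding velocity_at_def u_def a_def ..
  have "velocity_at (W ^^ k) \<psi> = limsup (\<lambda>t. ereal (real k) * u (k * t))"
    unfolding velocity_at_def funpow_mult
  proof (rule arg_cong[where f = limsup], rule ext)
    fix t
    show "ereal (l2norm (posop ((W ^^ (k * t)) \<psi>)) / real t) = ereal (real k) * u (k * t)"
      using assms(3) by (cases "t = 0") (auto simp: u_def a_def)
  qed
  also have "\<dots> = ereal (real k) * limsup (\<lambda>t. u (k * t))"
    by (rule limsup_ereal_mult_left) simp
  also have "limsup (\<lambda>t. u (k * t)) = limsup u"
  proof (rule antisym)
    have "strict_mono (\<lambda>t. k * t)" using assms(3) by (simp add: strict_mono_def)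
    from limsup_subseq_mono[OF this, of u] show "limsup (\<lambda>t. u (k * t)) \<le> limsup u"
      by (simp add: comp_def)
  next
    have ev: "\<forall>\<^sub>F n in sequentially. u n \<le> u (k * (n div k)) + ereal (real k * D / real n)"
      unfolding eventually_sequentially
    proof (intro exI[of _ k] allI impI)
      fix n assume n: "k \<le> n"
      define m where "m = n div k"
      define r where "r = n mod k"
      have nm: "n = k * m + r" unfolding m_def r_def by simp
      have rk: "r < k" unfolding r_def using assms(3) by simp
      have m1: "m \<ge> 1" unfolding m_def using n assms(3)
        by (metis div_le_mono div_self not_one_le_zero)
      have kmpos: "real (k * m) > 0" using m1 assms(3) by simp
      have kmn: "real (k * m) \<le> real n" using nm by simp
      have "a n \<le> a (k * m) + real r * D" using steps[of "k * m" r] nm by simp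
      also have "\<dots> \<le> a (k * m) + real k * D" using rk D0 by (intro add_left_mono mult_right_mono) auto
      finally have an: "a n \<le> a (k * m) + real k * D" .
      have "a n / real n \<le> (a (k * m) + real k * D) / real n"
        using an kmn kmpos by (intro divide_right_mono) auto
      also have "\<dots> = a (k * m) / real n + real k * D / real n" by (simp add: add_divide_distrib)
      also have "a (k * m) / real n \<le> a (k * m) / real (k * m)"
        using a0 kmn kmpos by (intro divide_left_mono) auto
      finally have "a n / real n \<le> a (k * m) / real (k * m) + real k * D / real n" by simp
      then show "u n \<le> u (k * (n div k)) + ereal (real k * D / real n)"
        unfolding u_def m_def by simp
    qed
    have "limsup u \<le> limsup (\<lambda>n. u (k * (n div k)) + ereal (real k * D / real n))"
      by (rule Limsup_mono[OF ev])
    also have "\<dots> \<le> limsup (\<lambda>n. u (k * (n div k))) + limsup (\<lambda>n. ereal (real k * D / real n))"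
      by (rule ereal_limsup_add_mono)
    also have "limsup (\<lambda>n. ereal (real k * D / real n)) = 0"
    proof -
      have "(\<lambda>n. real k * D / real n) \<longlonglongrightarrow> 0" by (rule lim_const_over_n)
      then have "(\<lambda>n. ereal (real k * D / real n)) \<longlonglongrightarrow> ereal 0" by (rule tendsto_ereal)
      then show ?thesis unfolding zero_ereal_def by (rule lim_imp_Limsup[OF sequentially_bot])
    qed
    also have "limsup (\<lambda>n. u (k * (n div k))) \<le> limsup (\<lambda>t. u (k * t))"
      by (rule limsup_compose_le[OF div_filterlim[OF assms(3)], of "\<lambda>t. u (k * t)"])
    finally show "limsup u \<le> limsup (\<lambda>t. u (k * t))" by simp
  qed
  finally show ?thesis using vW by simp
qed

theorem lemma3p6:
  fixes W :: "qvec \<Rightarrow> qvec" and k :: nat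
  assumes "qwalk W"
  shows "velocity (W ^^ k) = ereal (real k) * velocity W"
proof -
  define Y where "Y = {\<psi>. \<psi> \<in> domQ \<and> l2norm \<psi> = 1}"
  have Y: "Y \<noteq> {}" using delta_in unfolding Y_def by blast
  show ?thesis
  proof (cases "k = 0")
    case True
    have z: "velocity_at (W ^^ 0) \<psi> = 0" for \<psi>
    proof -
      have "(\<lambda>n. l2norm (posop \<psi>) / real n) \<longlonglongrightarrow> 0" by (rule lim_const_over_n)
      then have "(\<lambda>n. ereal (l2norm (posop \<psi>) / real n)) \<longlonglongrightarrow> ereal 0" by (rule tendsto_ereal)
      then have "limsup (\<lambda>n. ereal (l2norm (posop \<psi>) / real n)) = 0"
        unfolding zero_ereal_def by (rule lim_imp_Limsup[OF sequentially_bot])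
      then show ?thesis unfolding velocity_at_def by simp
    qed
    have "velocity (W ^^ k) = (SUP \<psi>\<in>Y. 0)" unfolding velocity_def Y_def[symmetric] True z ..
    also have "\<dots> = 0" using Y by simp
    finally show ?thesis using True by (simp flip: zero_ereal_def)
  next
    case False
    then have k1: "k \<ge> 1" by simp
    have "velocity (W ^^ k) = (SUP \<psi>\<in>Y. ereal (real k) * velocity_at W \<psi>)"
      unfolding velocity_def Y_def[symmetric]
      by (rule SUP_cong) (auto simp: Y_def vel_pt[OF assms _ k1])
    also have "\<dots> = ereal (real k) * velocity W"
      unfolding velocity_def Y_def[symmetric] by (rule Sup_ereal_mult_left'[OF Y, symmetric]) simp
    finally show ?thesis .
  qed
qed

end
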